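(* For $x=(a,b,c,d)\in\mathbb{Z}^4$, let $P(x)=b^2c^2+18abcd-4ac^3-4b^3d-27a^2d^2$. Writing $\mathcal{E}=2\mathbb{Z}$ and $\mathcal{O}=2\mathbb{Z}+1$, we have $P(x)\equiv 4\pmod{16}$ if and only if one of the following holds: (1) $a,b,c,d\in\mathcal{O}$ and $a+b+c+d\in2\mathcal{O}$; (2) $b,c\in\mathcal{E}$ and $ad\in2\mathcal{O}$; (3) $a\in2\mathcal{E}$, $b\in2\mathcal{O}$, $c\in\mathcal{O}$; (4) $d\in2\mathcal{E}$, $c\in2\mathcal{O}$, $b\in\mathcal{O}$; (5) $b+c\in\mathcal{O}$ and $a+c,\ b+d\in2\mathcal{E}$.
   Context: Here $2\mathcal{O}=\{2n: n\text{ odd}\}$ and $2\mathcal{E}=4\mathbb{Z}$. *)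

theory Defs
  imports Main
begin

definition P4 :: "int \<Rightarrow> int \<Rightarrow> int \<Rightarrow> int \<Rightarrow> int" where
  "P4 a b c d = b^2*c^2 + 18*a*b*c*d - 4*a*c^3 - 4*b^3*d - 27*a^2*d^2"

definition EvenSet :: "int set" where "EvenSet = {n. even n}"
definition OddSet :: "int set" where "OddSet = {n. odd n}"
definition TwoOdd :: "int set" where "TwoOdd = {2*n | n. odd n}"
definition TwoEven :: "int set" where "TwoEven = {2*n | n. even n}"

end

theory Submission
  imports Defs
begin

definition C4 :: "int \<Rightarrow> int \<Rightarrow> int \<Rightarrow> int \<Rightarrow> bool" where
 "C4 a b c d = ((odd a \<and> odd b \<and> odd c \<and> odd d \<and> (a+b+c+d) mod 4 = 2)
   \<or> (even b \<and> even c \<and> (a*d) mod 4 = 2)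
   \<or> (a mod 4 = 0 \<and> b mod 4 = 2 \<and> odd c)
   \<or> (d mod 4 = 0 \<and> c mod 4 = 2 \<and> odd b)
   \<or> (odd (b+c) \<and> (a+c) mod 4 = 0 \<and> (b+d) mod 4 = 0))"

lemma table: "\<forall>a\<in>set [0..7]. \<forall>b\<in>set [0..7]. \<forall>c\<in>set [0..7]. \<forall>d\<in>set [0..7].
   (P4 a b c d mod 16 = 4) = C4 a b c d"
  unfolding C4_def P4_def by code_simp

lemma two_odd: "(x \<in> TwoOdd) = (x mod 4 = 2)"
proof
  assume "x \<in> TwoOdd" then obtain n where "x = 2*n" "odd n" by (auto simp: TwoOdd_def)
  then show "x mod 4 = 2" by (auto elim!: oddE)
next
  assume h: "x mod 4 = 2"
  then have "x = 2*(x div 2)" "odd (x div 2)" by presburger+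
  then show "x \<in> TwoOdd" unfolding TwoOdd_def by blast
qed

lemma two_even: "(x \<in> TwoEven) = (x mod 4 = 0)"
proof
  assume "x \<in> TwoEven" then obtain n where "x = 2*n" "even n" by (auto simp: TwoEven_def)
  then show "x mod 4 = 0" by (auto elim!: evenE)
next
  assume h: "x mod 4 = 0"
  then have "x = 2*(x div 2)" "even (x div 2)" by presburger+
  then show "x \<in> TwoEven" unfolding TwoEven_def by blast
qed

lemma sa: "P4 (a+8*k) b c d mod 16 = P4 a b c d mod 16"
proof -
  have "\<exists>E. P4 (a+8*k) b c d = P4 a b c d + 16*E"
    by (rule exI[of _ "9*k*b*c*d - 2*k*c^3 - 27*(a*k+4*k^2)*d^2"]) (simp add: P4_def power2_eq_square power3_eq_cube algebra_simps)
  then obtain E where "P4 (a+8*k) b c d = P4 a b c d + 16*E" by blast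
  then show ?thesis by simp
qed
lemma sb: "P4 a (b+8*k) c d mod 16 = P4 a b c d mod 16"
proof -
  have "\<exists>E. P4 a (b+8*k) c d = P4 a b c d + 16*E"
    by (rule exI[of _ "(b*k+4*k^2)*c^2 + 9*a*k*c*d - 2*(3*b^2*k+24*b*k^2+64*k^3)*d"]) (simp add: P4_def power2_eq_square power3_eq_cube algebra_simps)
  then obtain E where "P4 a (b+8*k) c d = P4 a b c d + 16*E" by blast
  then show ?thesis by simp
qed
lemma sc: "P4 a b (c+8*k) d mod 16 = P4 a b c d mod 16"
proof -
  have "\<exists>E. P4 a b (c+8*k) d = P4 a b c d + 16*E"
    by (rule exI[of _ "(c*k+4*k^2)*b^2 + 9*a*b*k*d - 2*a*(3*c^2*k+24*c*k^2+64*k^3)"]) (simp add: P4_def power2_eq_square power3_eq_cube algebra_simps)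
  then obtain E where "P4 a b (c+8*k) d = P4 a b c d + 16*E" by blast
  then show ?thesis by simp
qed
lemma sd: "P4 a b c (d+8*k) mod 16 = P4 a b c d mod 16"
proof -
  have "\<exists>E. P4 a b c (d+8*k) = P4 a b c d + 16*E"
    by (rule exI[of _ "9*a*b*c*k - 2*b^3*k - 27*(d*k+4*k^2)*a^2"]) (simp add: P4_def power2_eq_square power3_eq_cube algebra_simps)
  then obtain E where "P4 a b c (d+8*k) = P4 a b c d + 16*E" by blast
  then show ?thesis by simp
qed

lemma P4_red: "P4 a b c d mod 16 = P4 (a mod 8) (b mod 8) (c mod 8) (d mod 8) mod 16"
proof -
  have x: "x = x mod 8 + 8*(x div 8)" for x :: int by simp
  have "P4 a b c d mod 16 = P4 (a mod 8 + 8*(a div 8)) (b mod 8 + 8*(b div 8)) (c mod 8 + 8*(c div 8)) (d mod 8 + 8*(d div 8)) mod 16"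
    by simp
  also have "\<dots> = P4 (a mod 8) (b mod 8) (c mod 8) (d mod 8) mod 16"
    by (simp only: sa sb sc sd)
  finally show ?thesis .
qed

lemma M4: "(x::int) = y + 4*k \<Longrightarrow> x mod 4 = y mod 4" by simp
lemma O2: "(x::int) = y + 2*k \<Longrightarrow> odd x = odd y" by simp
lemma C4_shift: "C4 (8*qa+ra) (8*qb+rb) (8*qc+rc) (8*qd+rd) = C4 ra rb rc rd"
proof -
  have 1: "(8*qa+ra + (8*qb+rb) + (8*qc+rc) + (8*qd+rd)) mod 4 = (ra+rb+rc+rd) mod 4"
    by (rule M4[where k="2*(qa+qb+qc+qd)"]) (simp add: algebra_simps)
  have 2: "((8*qa+ra) * (8*qd+rd)) mod 4 = (ra*rd) mod 4"
    by (rule M4[where k="2*qa*rd + 2*ra*qd + 16*qa*qd"]) (simp add: algebra_simps)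
  have 3: "(8*qa+ra + (8*qc+rc)) mod 4 = (ra+rc) mod 4"
    by (rule M4[where k="2*(qa+qc)"]) (simp add: algebra_simps)
  have 4: "(8*qb+rb + (8*qd+rd)) mod 4 = (rb+rd) mod 4"
    by (rule M4[where k="2*(qb+qd)"]) (simp add: algebra_simps)
  have 5: "odd (8*qb+rb + (8*qc+rc)) = odd (rb+rc)"
    by (rule O2[where k="4*(qb+qc)"]) (simp add: algebra_simps)
  have 6: "(8*q+r) mod 4 = r mod 4" for q r :: int
    by (rule M4[where k="2*q"]) (simp add: algebra_simps)
  have 7: "odd (8*q+r) = odd r" for q r :: int
    by (rule O2[where k="4*q"]) (simp add: algebra_simps)
  have 8: "even (8*q+r) = even r" for q r :: int using 7 by blast
  show ?thesis unfolding C4_def by (simp only: 1 2 3 4 5 6 7 8)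
qed
lemma C4_red: "C4 a b c d = C4 (a mod 8) (b mod 8) (c mod 8) (d mod 8)"
  using C4_shift[of "a div 8" "a mod 8" "b div 8" "b mod 8" "c div 8" "c mod 8" "d div 8" "d mod 8"]
  by simp

lemma oddset: "(x \<in> OddSet) = odd x" by (simp add: OddSet_def)
lemma evenset: "(x \<in> EvenSet) = even x" by (simp add: EvenSet_def)

theorem lemma2p5:
  fixes a b c d :: int
  shows "P4 a b c d mod 16 = 4 \<longleftrightarrow>
    ((a \<in> OddSet \<and> b \<in> OddSet \<and> c \<in> OddSet \<and> d \<in> OddSet \<and> a + b + c + d \<in> TwoOdd)
     \<or> (b \<in> EvenSet \<and> c \<in> EvenSet \<and> a * d \<in> TwoOdd)
     \<or> (a \<in> TwoEven \<and> b \<in> TwoOdd \<and> c \<in> OddSet)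
     \<or> (d \<in> TwoEven \<and> c \<in> TwoOdd \<and> b \<in> OddSet)
     \<or> (b + c \<in> OddSet \<and> a + c \<in> TwoEven \<and> b + d \<in> TwoEven))"
proof -
  have r: "x mod 8 \<in> set [0..7]" for x :: int by (simp add: set_upto)
  have "(P4 a b c d mod 16 = 4) = C4 a b c d"
    unfolding P4_red[of a b c d] C4_red[of a b c d]
    by (rule table[rule_format, OF r r r r])
  moreover have "C4 a b c d =
    ((a \<in> OddSet \<and> b \<in> OddSet \<and> c \<in> OddSet \<and> d \<in> OddSet \<and> a + b + c + d \<in> TwoOdd)
     \<or> (b \<in> EvenSet \<and> c \<in> EvenSet \<and> a * d \<in> TwoOdd)
     \<or> (a \<in> TwoEven \<and> b \<in> TwoOdd \<and> c \<in> OddSet)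
     \<or> (d \<in> TwoEven \<and> c \<in> TwoOdd \<and> b \<in> OddSet)
     \<or> (b + c \<in> OddSet \<and> a + c \<in> TwoEven \<and> b + d \<in> TwoEven))"
    unfolding C4_def by (simp only: two_odd two_even oddset evenset)
  ultimately show ?thesis by (rule trans)
qed

end
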